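(* Let $T$ be a weighted star (a star $K_{1,n}$ with nonzero real edge weights). Then $T^{\#}$ is isomorphic to $T$.
   Context: For a weighted graph $G$ with adjacency matrix $A$ (entry $(i,j)$ equal to the weight of edge $v_iv_j$, or $0$ if no edge), $A^{\#}$ is the group inverse of $A$ (unique $X$ with $AXA=A$, $XAX=X$, $AX=XA$), and the group inverse graph $G^{\#}$ is the weighted graph on the same vertex set with $v_iv_j$ an edge iff $(A^{\#})_{ij}\neq 0$, weighted by that entry. Two weighted graphs are called isomorphic if their underlying (unweighted) graphs are isomorphic. *)

theory Defs
  imports "HOL-Analysis.Analysis"
begin

text \<open>A weighted graph on the finite vertex type 'n is given by its adjacency
matrix A (symmetric; entry (i,j) is the weight of edge ij, 0 if no edge).\<close>

definition is_group_inverse :: "real^'n^'n \<Rightarrow> real^'n^'n \<Rightarrow> bool" where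
  "is_group_inverse A X \<longleftrightarrow> A ** X ** A = A \<and> X ** A ** X = X \<and> A ** X = X ** A"

definition group_inverse :: "real^'n^'n \<Rightarrow> real^'n^'n" where
  "group_inverse A = (THE X. is_group_inverse A X)"

definition weighted_star :: "real^'n^'n \<Rightarrow> bool" where
  "weighted_star A \<longleftrightarrow> transpose A = A \<and> (\<forall>i. A $ i $ i = 0) \<and>
     (\<exists>c. \<forall>i j. i \<noteq> j \<longrightarrow> (A $ i $ j \<noteq> 0 \<longleftrightarrow> (i = c \<or> j = c)))"

definition underlying_iso :: "real^'n^'n \<Rightarrow> real^'n^'n \<Rightarrow> bool" where
  "underlying_iso A B \<longleftrightarrow> (\<exists>f. bij f \<and> (\<forall>i j. A $ i $ j \<noteq> 0 \<longleftrightarrow> B $ f i $ f j \<noteq> 0))"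

end

theory Submission
  imports Defs
begin

lemma gi_unique:
  fixes A X Y :: "real^'n^'n"
  assumes "is_group_inverse A X" "is_group_inverse A Y"
  shows "X = Y"
proof -
  have x1: "A ** X ** A = A" and x2: "X ** A ** X = X" and x3: "A ** X = X ** A"
    and y1: "A ** Y ** A = A" and y2: "Y ** A ** Y = Y" and y3: "A ** Y = Y ** A"
    using assms unfolding is_group_inverse_def by auto
  have "A ** X = (A ** Y ** A) ** X" using y1 by simp
  also have "\<dots> = (Y ** A) ** (A ** X)" by (simp add: matrix_mul_assoc y3)
  also have "\<dots> = Y ** (A ** X ** A)" by (metis matrix_mul_assoc x3)
  also have "\<dots> = Y ** A" using x1 by simp
  finally have AXY: "A ** X = A ** Y" using y3 by simp
  have "X = X ** A ** X" using x2 by simp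
  also have "\<dots> = X ** (A ** Y)" by (metis matrix_mul_assoc AXY)
  also have "\<dots> = (A ** Y) ** Y" by (metis matrix_mul_assoc AXY x3)
  also have "\<dots> = Y" using y2 y3 by (simp add: matrix_mul_assoc)
  finally show ?thesis .
qed

lemma sum_single_c:
  fixes f :: "'n::finite \<Rightarrow> real"
  assumes "\<And>k. k \<noteq> c \<Longrightarrow> f k = 0"
  shows "sum f UNIV = f c"
proof -
  have "sum f {c} = sum f UNIV" by (rule sum.mono_neutral_left) (use assms in auto)
  then show ?thesis by simp
qed

lemma star_cube:
  fixes A :: "real^'n^'n"
  assumes Z: "\<And>i j. A$i$j \<noteq> 0 \<longleftrightarrow> (i \<noteq> j \<and> (i = c \<or> j = c))"
    and S: "\<And>i j. A$i$j = A$j$i"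
  defines "s \<equiv> (\<Sum>k\<in>UNIV. (A$c$k)^2)"
  shows "A ** A ** A = s *\<^sub>R A"
proof -
  have A0: "A$i$j = 0" if "\<not> (i \<noteq> j \<and> (i = c \<or> j = c))" for i j
    using Z that by blast
  have A2: "(A ** A)$i$j = (if i = c \<and> j = c then s else if i \<noteq> c \<and> j \<noteq> c then A$i$c * A$c$j else 0)" for i j
  proof -
    have e: "(A ** A)$i$j = (\<Sum>k\<in>UNIV. A$i$k * A$k$j)" by (simp add: matrix_matrix_mult_def)
    show ?thesis
    proof (cases "i = c")
      case True
      show ?thesis
      proof (cases "j = c")
        case True
        then show ?thesis using \<open>i = c\<close> e by (simp add: s_def power2_eq_square S[of _ c])
      next
        case False
        have "(\<Sum>k\<in>UNIV. A$i$k * A$k$j) = A$i$c * A$c$j"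
          by (rule sum_single_c) (use A0 False in auto)
        then show ?thesis using e True False A0 by simp
      qed
    next
      case False
      have "(\<Sum>k\<in>UNIV. A$i$k * A$k$j) = A$i$c * A$c$j"
        by (rule sum_single_c) (use A0 False in auto)
      then show ?thesis using e False A0 by auto
    qed
  qed
  show ?thesis
  proof (simp add: vec_eq_iff, intro allI)
    fix i j
    have e: "(A ** A ** A)$i$j = (\<Sum>k\<in>UNIV. (A**A)$i$k * A$k$j)" by (simp add: matrix_matrix_mult_def)
    show "(A ** A ** A)$i$j = s * A$i$j"
    proof (cases "j = c")
      case False
      have "(\<Sum>k\<in>UNIV. (A**A)$i$k * A$k$j) = (A**A)$i$c * A$c$j"
        by (rule sum_single_c) (use A0 False in auto)
      then show ?thesis using e False A2 A0 by auto
    next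
      case True
      show ?thesis
      proof (cases "i = c")
        case True
        have "(\<Sum>k\<in>UNIV. (A**A)$i$k * A$k$j) = (A**A)$i$c * A$c$j"
          by (rule sum_single_c) (use A0 A2 True in auto)
        then show ?thesis using e True \<open>j = c\<close> A0 by auto
      next
        case False
        have "(\<Sum>k\<in>UNIV. (A**A)$i$k * A$k$j) = (\<Sum>k\<in>UNIV. A$i$c * (A$c$k * A$k$c))"
          by (rule sum.cong) (use A2 A0 False True in auto)
        also have "\<dots> = A$i$c * s"
          by (simp add: sum_distrib_left[symmetric] s_def power2_eq_square S[of _ c])
        finally show ?thesis using e True by simp
      qed
    qed
  qed
qed

theorem corollary2p3:
  fixes A :: "real^'n^'n"
  assumes "CARD('n) \<ge> 2" and "weighted_star A"
  shows "(\<exists>!X. is_group_inverse A X) \<and> underlying_iso A (group_inverse A)"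
proof -
  obtain c where T: "transpose A = A" and D: "\<And>i. A$i$i = 0"
    and C: "\<And>i j. i \<noteq> j \<Longrightarrow> (A$i$j \<noteq> 0 \<longleftrightarrow> (i = c \<or> j = c))"
    using assms(2) unfolding weighted_star_def by blast
  have Z: "A$i$j \<noteq> 0 \<longleftrightarrow> (i \<noteq> j \<and> (i = c \<or> j = c))" for i j
    using C D by (cases "i = j") auto
  have S: "A$i$j = A$j$i" for i j
    using T by (metis transpose_def vec_lambda_beta)
  define s where "s = (\<Sum>k\<in>UNIV. (A$c$k)^2)"
  have cube: "A ** A ** A = s *\<^sub>R A" using star_cube[OF Z S] s_def by blast
  obtain d :: 'n where "d \<noteq> c"
  proof -
    have "\<not> UNIV \<subseteq> {c}"
    proof
      assume "UNIV \<subseteq> {c}"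
      then have "CARD('n) \<le> card {c}" by (intro card_mono) auto
      then show False using assms(1) by simp
    qed
    then show ?thesis using that by blast
  qed
  have "0 < (A$c$d)^2" using Z \<open>d \<noteq> c\<close> by auto
  also have "(A$c$d)^2 \<le> s" unfolding s_def
    by (rule member_le_sum) auto
  finally have spos: "s > 0" .
  define X where "X = (1/s) *\<^sub>R A"
  have gi: "is_group_inverse A X"
    unfolding is_group_inverse_def X_def
    using spos cube
    by (simp add: matrix_scalar_ac scalar_matrix_assoc[symmetric] matrix_mul_assoc)
  have uq: "\<exists>!X. is_group_inverse A X" using gi gi_unique by blast
  have "group_inverse A = X" unfolding group_inverse_def
    using gi gi_unique by blast
  then have "underlying_iso A (group_inverse A)"
    unfolding underlying_iso_def X_def using spos
    by (intro exI[of _ id]) auto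
  with uq show ?thesis by blast
qed

end
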